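(* Let $n\ge2$, $p\ge1$, and consider the change-point model $\boldsymbol{X}=\boldsymbol{Z}\boldsymbol{\beta}+\boldsymbol{c}_\tau\phi+\boldsymbol{\Gamma}\boldsymbol{\xi}$ with a possible change at an unknown $\tau\in[n-1]$, where $\boldsymbol{Z}$ is a known $n\times p$ covariate matrix, $\boldsymbol{c}_\tau\in\mathbb{R}^n$ is a known vector of covariates specific to a change at $\tau$, $\boldsymbol{\beta}\in\mathbb{R}^p$ and $\phi\in\mathbb{R}$ are unknown parameters, $\boldsymbol{\Gamma}$ is a known invertible $n\times n$ matrix and $\boldsymbol{\xi}\sim N_n(0,I_n)$. Then there is an $h^*\in\mathcal{H}_{1,2n-2}$ equivalent to the likelihood-ratio test (over unknown $\tau\in[n-1]$) for testing $\phi=0$ against $\phi\neq0$, i.e. $h^*(\boldsymbol{x})=1$ exactly when this likelihood-ratio test rejects.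
   Context: Neural network classes: for $L\ge1$ and widths $\boldsymbol{m}=(m_1,\ldots,m_L)$, set $m_0=n$, $m_{L+1}=1$; for $\boldsymbol{b}\in\mathbb{R}^r$ let $\sigma_{\boldsymbol{b}}(y_1,\ldots,y_r)=(\max(y_1-b_1,0),\ldots,\max(y_r-b_r,0))$. $\mathcal{H}_{L,\boldsymbol{m}}$ is the class of all functions $h:\mathbb{R}^n\to\{0,1\}$ of the form $h(\boldsymbol{x})=\sigma^*_\lambda W_L\sigma_{\boldsymbol{b}_L}\cdots W_1\sigma_{\boldsymbol{b}_1}W_0\boldsymbol{x}$, where $\sigma^*_\lambda(x)=\mathbb{1}\{x>\lambda\}$ with $\lambda>0$, $W_\ell\in\mathbb{R}^{m_{\ell+1}\times m_\ell}$, $\boldsymbol{b}_\ell\in\mathbb{R}^{m_\ell}$. $\mathcal{H}_{1,m}$ denotes the class with one hidden layer of width $m$. *)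

theory Defs
  imports "HOL-Analysis.Analysis"
begin

text \<open>The class H_{1,m}: one hidden ReLU layer of width m, inputs in R^n (n = CARD('n)).
  h(x) = sigma*_lambda W_1 sigma_b W_0 x, with rows W0 j of W_0 (j < m), b the bias vector,
  W1 the output weights, lambda > 0. Output 1/0 as a real number.\<close>
definition relu_net1 :: "nat \<Rightarrow> (real^'n \<Rightarrow> real) set" where
  "relu_net1 m = {h. \<exists>(W0 :: nat \<Rightarrow> real^'n) (b :: nat \<Rightarrow> real) (W1 :: nat \<Rightarrow> real) (lam :: real).
      lam > 0 \<and>
      (\<forall>x. h x = (if (\<Sum>j<m. W1 j * max ((W0 j) \<bullet> x - b j) 0) > lam then 1 else 0))}"

text \<open>Density at x of X = mu + Gamma xi with xi ~ N_n(0, I_n), Gamma invertible: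
  phi_n(Gamma^{-1}(x - mu)) / |det Gamma|.\<close>
definition gauss_lik :: "real^'n^'n \<Rightarrow> real^'n \<Rightarrow> real^'n \<Rightarrow> real" where
  "gauss_lik Gam mu x =
     (2 * pi) powr (- real CARD('n) / 2) / \<bar>det Gam\<bar> *
     exp (- (norm (matrix_inv Gam *v (x - mu)))\<^sup>2 / 2)"

text \<open>Likelihood ratio for H0: phi = 0 vs H1: phi \<noteq> 0 (tau \<in> [n-1] unknown) in the model
  X = Z beta + c_tau phi + Gamma xi.\<close>
definition cp_LR :: "real^'p^'n \<Rightarrow> (nat \<Rightarrow> real^'n) \<Rightarrow> real^'n^'n \<Rightarrow> real^'n \<Rightarrow> real" where
  "cp_LR Z c Gam x =
     Sup {gauss_lik Gam (Z *v beta + phi *\<^sub>R c tau) x | tau beta phi.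
            tau \<in> {1..CARD('n) - 1} \<and> phi \<noteq> 0}
   / Sup {gauss_lik Gam (Z *v beta) x | beta. True}"

end

theory Submission
  imports Defs
begin


lemma pair_sum: "(\<Sum>j<2*(k::nat). f j) = (\<Sum>i<k. f (2*i) + f (2*i+1))"
  by (induction k) (auto simp: sum.lessThan_Suc ac_simps)

lemma sum_pos_iff:
  fixes e :: "nat \<Rightarrow> real"
  assumes "finite I" "\<And>i. i \<in> I \<Longrightarrow> e i \<ge> 0"
  shows "(\<Sum>i\<in>I. e i) > 0 \<longleftrightarrow> (\<exists>i\<in>I. e i > 0)"
proof
  assume p: "(\<Sum>i\<in>I. e i) > 0"
  show "\<exists>i\<in>I. e i > 0"
  proof (rule ccontr)
    assume "\<not> (\<exists>i\<in>I. e i > 0)"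
    then have "\<And>i. i \<in> I \<Longrightarrow> e i \<le> 0" by (simp add: not_less)
    then have "(\<Sum>i\<in>I. e i) \<le> 0" by (rule sum_nonpos)
    with p show False by simp
  qed
next
  assume "\<exists>i\<in>I. e i > 0"
  then obtain i where "i \<in> I" "e i > 0" by blast
  show "(\<Sum>i\<in>I. e i) > 0" using sum_pos2[of I i e] assms \<open>i \<in> I\<close> \<open>e i > 0\<close> by blast
qed

lemma aux1: "(2::real)*max u 0 + 1 * max (- u - (-1)) 0 - 1 \<ge> 0 \<and> ((2::real)*max u 0 + 1 * max (- u - (-1)) 0 - 1 > 0 \<longleftrightarrow> \<bar>u\<bar> > 0)"
  by (cases "u \<ge> 0"; cases "u \<le> 1") (simp_all add: max_def abs_if)
lemma aux2: "(t::real) > 0 \<Longrightarrow> 1 * max (u - (-t)) 0 + 1 * max (- u - (-t)) 0 - 2 * t \<ge> 0 \<and> (1 * max (u - (-t)) 0 + 1 * max (- u - (-t)) 0 - 2 * t > 0 \<longleftrightarrow> \<bar>u\<bar> > t)"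
  by (cases "u \<ge> -t"; cases "u \<le> t") (simp_all add: max_def abs_if)
lemma aux3: "(t::real) \<ge> 0 \<Longrightarrow> 1 * max (u - t) 0 + 1 * max (- u - t) 0 - 0 \<ge> 0 \<and> (1 * max (u - t) 0 + 1 * max (- u - t) 0 - 0 > 0 \<longleftrightarrow> \<bar>u\<bar> > t)"
  by (cases "u \<ge> t"; cases "u \<le> -t") (simp_all add: max_def abs_if)

lemma net_true:
  assumes "m \<ge> 1"
  shows "\<exists>h \<in> relu_net1 m. \<forall>x::real^'n. h x = 1"
proof (rule bexI)
  let ?h = "\<lambda>x::real^'n. (if (\<Sum>j<m. (1::real) * max ((0::real^'n) \<bullet> x - (-2)) 0) > 1 then 1 else (0::real))"
  show "?h \<in> relu_net1 m"
    unfolding relu_net1_def by (rule CollectI, rule exI[of _ "\<lambda>_. 0"], rule exI[of _ "\<lambda>_. -2"],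
       rule exI[of _ "\<lambda>_. 1"], rule exI[of _ 1]) simp
  show "\<forall>x. ?h x = 1" using assms by simp
qed

lemma net_exists:
  fixes bv :: "nat \<Rightarrow> real^'n" and t :: real
  assumes t: "t \<ge> 0" and k: "k \<ge> 1"
  shows "\<exists>h \<in> relu_net1 (2*k). \<forall>x. h x = 1 \<longleftrightarrow> (\<exists>i<k. \<bar>bv i \<bullet> x\<bar> > t)"
proof -
  define W0 where "W0 (j::nat) = (if even j then bv (j div 2) else - bv (j div 2))" for j
  define B where "B (j::nat) = (if t = 0 then (if j = 0 then 0 else if j = 1 then -1 else 0)
                         else (if j < 2 then -t else t))" for j
  define W1 where "W1 (j::nat) = (if t = 0 \<and> j = 0 then 2 else (1::real))" for j
  define lam where "lam = (if t = 0 then 1 else 2 * t)"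
  define h where "h x = (if (\<Sum>j<2*k. W1 j * max ((W0 j) \<bullet> x - B j) 0) > lam then 1 else (0::real))" for x
  have lam: "lam > 0" using t unfolding lam_def by auto
  have hin: "h \<in> relu_net1 (2*k)"
    unfolding relu_net1_def mem_Collect_eq
    apply (rule exI[of _ W0], rule exI[of _ B], rule exI[of _ W1], rule exI[of _ lam])
    apply (intro conjI allI)
     apply (rule lam)
    apply (rule h_def)
    done
  have key: "(\<Sum>j<2*k. W1 j * max ((W0 j) \<bullet> x - B j) 0) > lam \<longleftrightarrow> (\<exists>i<k. \<bar>bv i \<bullet> x\<bar> > t)" for x
  proof -
    define e where "e i = W1 (2*i) * max ((W0 (2*i)) \<bullet> x - B (2*i)) 0
       + W1 (2*i+1) * max ((W0 (2*i+1)) \<bullet> x - B (2*i+1)) 0 - (if i = 0 then lam else 0)" for i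
    have s1: "(\<Sum>i<k. (if i = 0 then lam else 0)) = lam"
      using k by (simp add: sum.delta)
    have "(\<Sum>j<2*k. W1 j * max ((W0 j) \<bullet> x - B j) 0) - lam = (\<Sum>i<k. e i)"
      unfolding pair_sum e_def sum_subtractf s1 by simp
    have ei: "e i \<ge> 0 \<and> (e i > 0 \<longleftrightarrow> \<bar>bv i \<bullet> x\<bar> > t)" for i
    proof -
      have w0: "W0 (2*i) = bv i" "W0 (2*i+1) = - bv i" unfolding W0_def by auto
      show ?thesis
      proof (cases "i = 0")
        case True
        show ?thesis
        proof (cases "t = 0")
          case True
          then show ?thesis using aux1[of "bv 0 \<bullet> x"] \<open>i = 0\<close>
            unfolding e_def w0 inner_minus_left W1_def B_def lam_def by simp
        next
          case False
          then show ?thesis using aux2[of t "bv 0 \<bullet> x"] \<open>i = 0\<close> t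
            unfolding e_def w0 inner_minus_left W1_def B_def lam_def by simp
        qed
      next
        case False
        have b: "B (2*i) = t" "B (2*i+1) = t" "W1 (2*i) = 1" "W1 (2*i+1) = 1"
          using False unfolding B_def W1_def by auto
        show ?thesis using aux3[of t "bv i \<bullet> x"] t False
          unfolding e_def w0 inner_minus_left b by simp
      qed
    qed
    have A: "(\<Sum>i\<in>{..<k}. e i) > 0 \<longleftrightarrow> (\<exists>i\<in>{..<k}. e i > 0)"
      by (rule sum_pos_iff) (simp_all add: ei)
    have B: "(\<exists>i\<in>{..<k}. e i > 0) \<longleftrightarrow> (\<exists>i<k. \<bar>bv i \<bullet> x\<bar> > t)"
      using ei by auto
    have C: "(\<Sum>j<2*k. W1 j * max ((W0 j) \<bullet> x - B j) 0) > lam \<longleftrightarrow>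
       (\<Sum>j<2*k. W1 j * max ((W0 j) \<bullet> x - B j) 0) - lam > 0" by (rule iffI) linarith+
    show ?thesis
      unfolding C \<open>(\<Sum>j<2*k. W1 j * max ((W0 j) \<bullet> x - B j) 0) - lam = (\<Sum>i<k. e i)\<close> A B by (rule refl)
  qed
  have hx: "h x = 1 \<longleftrightarrow> (\<Sum>j<2*k. W1 j * max ((W0 j) \<bullet> x - B j) 0) > lam" for x
    unfolding h_def by simp
  have hh: "\<forall>x. h x = 1 \<longleftrightarrow> (\<exists>i<k. \<bar>bv i \<bullet> x\<bar> > t)"
    unfolding hx key by blast
  show ?thesis
  proof (rule bexI[where x=h])
    show "h \<in> relu_net1 (2*k)" by (rule hin)
    show "\<forall>x. h x = 1 \<longleftrightarrow> (\<exists>i<k. \<bar>bv i \<bullet> x\<bar> > t)" by (rule hh)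
  qed
qed



lemma sub_range: "subspace (range (\<lambda>b. (W::real^'p^'n) *v b))"
  unfolding subspace_def
proof (intro conjI ballI allI)
  show "0 \<in> range (\<lambda>b. W *v b)" by (rule range_eqI[of _ _ 0]) simp
  fix x y assume "x \<in> range (\<lambda>b. W *v b)" "y \<in> range (\<lambda>b. W *v b)"
  then obtain b1 b2 where "x = W *v b1" "y = W *v b2" by auto
  then show "x + y \<in> range (\<lambda>b. W *v b)" by (intro range_eqI[of _ _ "b1 + b2"]) (simp add: matrix_vector_right_distrib)
next
  fix r x assume "x \<in> range (\<lambda>b. W *v b)"
  then obtain b1 where "x = W *v b1" by auto
  then show "r *\<^sub>R x \<in> range (\<lambda>b. W *v b)" by (intro range_eqI[of _ _ "r *\<^sub>R b1"]) (simp add: matrix_vector_mult_scaleR)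
qed

lemma pyth_ge:
  fixes q z :: "real^'n"
  assumes "q \<bullet> z = 0"
  shows "(norm (q + z))\<^sup>2 \<ge> (norm z)\<^sup>2"
proof -
  have "(norm (q + z))\<^sup>2 = (norm q)\<^sup>2 + (norm z)\<^sup>2"
    by (rule norm_add_Pythagorean) (simp add: orthogonal_def assms)
  then show ?thesis by simp
qed

lemma sq_div:
  fixes D rho ph :: real
  assumes "D > 0"
  shows "(ph * D - rho)\<^sup>2 / D = ph\<^sup>2 * D - 2 * ph * rho + rho\<^sup>2 / D"
proof -
  have "(ph * D - rho)\<^sup>2 / D = (ph\<^sup>2 * D * D - 2 * ph * rho * D + rho\<^sup>2) / D"
    by (simp add: power2_eq_square algebra_simps)
  also have "\<dots> = ph\<^sup>2 * D - 2 * ph * rho + rho\<^sup>2 / D"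
    using assms by (simp add: add_divide_distrib diff_divide_distrib)
  finally show ?thesis .
qed

lemma quad_ge:
  fixes r d :: "real^'n" and ph :: real
  assumes "d \<noteq> 0"
  shows "(norm (r - ph *\<^sub>R d))\<^sup>2 \<ge> (norm r)\<^sup>2 - (r \<bullet> d)\<^sup>2 / (norm d)\<^sup>2"
proof -
  have D: "(norm d)\<^sup>2 > 0" using assms by simp
  have e: "(norm (r - ph *\<^sub>R d))\<^sup>2 = (norm r)\<^sup>2 - 2 * ph * (r \<bullet> d) + ph\<^sup>2 * (norm d)\<^sup>2"
  proof -
    have "(r - ph *\<^sub>R d) \<bullet> (r - ph *\<^sub>R d) = r \<bullet> r - 2 * ph * (r \<bullet> d) + ph\<^sup>2 * (d \<bullet> d)"
      by (simp add: inner_diff_left inner_diff_right inner_commute power2_eq_square algebra_simps)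
    then show ?thesis by (simp only: power2_norm_eq_inner)
  qed
  have "(norm r)\<^sup>2 - (r \<bullet> d)\<^sup>2 / (norm d)\<^sup>2 \<le> (norm r)\<^sup>2 - 2 * ph * (r \<bullet> d) + ph\<^sup>2 * (norm d)\<^sup>2"
  proof -
    have "0 \<le> (ph * (norm d)\<^sup>2 - r \<bullet> d)\<^sup>2 / (norm d)\<^sup>2" using D by simp
    also have "(ph * (norm d)\<^sup>2 - r \<bullet> d)\<^sup>2 / (norm d)\<^sup>2 = ph\<^sup>2 * (norm d)\<^sup>2 - 2 * ph * (r \<bullet> d) + (r \<bullet> d)\<^sup>2 / (norm d)\<^sup>2"
      using D by (rule sq_div)
    finally show ?thesis by simp
  qed
  then show ?thesis using e by simp
qed

lemma quad_eq:
  fixes r d :: "real^'n"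
  assumes "d \<noteq> 0"
  shows "(norm (r - ((r \<bullet> d) / (norm d)\<^sup>2) *\<^sub>R d))\<^sup>2 = (norm r)\<^sup>2 - (r \<bullet> d)\<^sup>2 / (norm d)\<^sup>2"
proof -
  have D: "(norm d)\<^sup>2 > 0" using assms by simp
  have e: "(norm (r - ph *\<^sub>R d))\<^sup>2 = (norm r)\<^sup>2 - 2 * ph * (r \<bullet> d) + ph\<^sup>2 * (norm d)\<^sup>2" for ph
  proof -
    have "(r - ph *\<^sub>R d) \<bullet> (r - ph *\<^sub>R d) = r \<bullet> r - 2 * ph * (r \<bullet> d) + ph\<^sup>2 * (d \<bullet> d)"
      by (simp add: inner_diff_left inner_diff_right inner_commute power2_eq_square algebra_simps)
    then show ?thesis by (simp only: power2_norm_eq_inner)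
  qed
  show ?thesis unfolding e using D by (simp add: field_simps power2_eq_square)
qed

lemma LR_formula:
  fixes Z :: "real^'p^'n" and c :: "nat \<Rightarrow> real^'n" and Gam :: "real^'n^'n"
    and dp a :: "nat \<Rightarrow> real^'n" and x :: "real^'n"
  assumes inv: "invertible Gam"
    and Tn: "CARD('n) \<ge> 2"
    and dpo: "\<And>tau b. dp tau \<bullet> ((matrix_inv Gam ** Z) *v b) = 0"
    and dpV: "\<And>tau. matrix_inv Gam *v c tau - dp tau \<in> range (\<lambda>b. (matrix_inv Gam ** Z) *v b)"
    and adef: "\<And>tau. a tau = (if dp tau = 0 then 0 else (1 / norm (dp tau)) *\<^sub>R dp tau)"
  shows "cp_LR Z c Gam x = exp (Max ((\<lambda>tau. ((matrix_inv Gam *v x) \<bullet> a tau)\<^sup>2) ` {1..CARD('n)-1}) / 2)"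
proof -
  define M where "M = matrix_inv Gam"
  define W where "W = M ** Z"
  define V where "V = range (\<lambda>b. W *v b)"
  define K where "K = (2 * pi) powr (- real CARD('n) / 2) / \<bar>det Gam\<bar>"
  define y where "y = M *v x"
  define T where "T = {1..CARD('n)-1}"
  define s where "s tau = (y \<bullet> a tau)\<^sup>2" for tau
  define S where "S = Max (s ` T)"
  have subV: "subspace V" unfolding V_def by (rule sub_range)
  have dpo': "dp tau \<bullet> v = 0" if "v \<in> V" for tau v using that dpo unfolding V_def W_def M_def by auto
  have dpV': "M *v c tau - dp tau \<in> V" for tau using dpV unfolding V_def W_def M_def by simp
  have K: "K > 0" using invertible_det_nz[of Gam] inv unfolding K_def by simp
  have gl: "gauss_lik Gam mu x = K * exp (- (norm (y - M *v mu))\<^sup>2 / 2)" for mu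
    unfolding gauss_lik_def K_def y_def M_def by (simp add: matrix_vector_mult_diff_distrib)
  have Tfin: "finite T" and Tne: "T \<noteq> {}" using Tn unfolding T_def by auto
  obtain p r where pV0: "p \<in> span V" and rV0: "\<And>w. w \<in> span V \<Longrightarrow> orthogonal r w" and ypr: "y = p + r"
    by (rule orthogonal_subspace_decomp_exists[of V y]) blast
  have spanV: "span V = V" using subV by simp
  have pV: "p \<in> V" using pV0 spanV by simp
  have rV: "r \<bullet> w = 0" if "w \<in> V" for w using rV0[of w] that spanV by (simp add: orthogonal_def)
  define R where "R = (norm r)\<^sup>2"
  have ya: "y \<bullet> a tau = r \<bullet> a tau" for tau
  proof -
    have "p \<bullet> a tau = 0" using dpo'[OF pV, of tau] unfolding adef by (simp add: inner_commute)
    then show ?thesis unfolding ypr by (simp add: inner_add_left)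
  qed
  have s2: "s tau = (if dp tau = 0 then 0 else (r \<bullet> dp tau)\<^sup>2 / (norm (dp tau))\<^sup>2)" for tau
    unfolding s_def ya unfolding adef by (simp add: power_divide)
  have s0: "s tau \<ge> 0" for tau unfolding s_def by simp
  have low: "(norm (y - w - ph *\<^sub>R (M *v c tau)))\<^sup>2 \<ge> R - s tau" if wV: "w \<in> V" for w ph tau
  proof -
    define q where "q = p - w - ph *\<^sub>R (M *v c tau - dp tau)"
    define z where "z = r - ph *\<^sub>R dp tau"
    have qV: "q \<in> V" unfolding q_def
      by (intro subspace_diff[OF subV] subspace_scale[OF subV] pV wV dpV')
    have qz: "q \<bullet> z = 0"
      unfolding z_def using rV[OF qV] dpo'[OF qV, of tau]
      by (simp add: inner_diff_right inner_commute)
    have eq: "y - w - ph *\<^sub>R (M *v c tau) = q + z"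
      unfolding q_def z_def ypr by (simp add: algebra_simps)
    have "(norm (y - w - ph *\<^sub>R (M *v c tau)))\<^sup>2 \<ge> (norm z)\<^sup>2"
      unfolding eq by (rule pyth_ge[OF qz])
    moreover have "(norm z)\<^sup>2 \<ge> R - s tau"
    proof (cases "dp tau = 0")
      case True then show ?thesis unfolding z_def R_def s2 by simp
    next
      case False then show ?thesis unfolding z_def R_def s2 using quad_ge[OF False, of r ph] by simp
    qed
    ultimately show ?thesis by (rule order.trans[rotated])
  qed
  have sS: "s tau \<le> S" if "tau \<in> T" for tau unfolding S_def using Tfin that by simp
  have SB: "Sup {gauss_lik Gam (Z *v beta) x | beta. True} = K * exp (- R / 2)"
  proof (rule cSup_eq_maximum)
    from pV obtain b0 where b0: "p = W *v b0" unfolding V_def by auto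
    have "gauss_lik Gam (Z *v b0) x = K * exp (- R / 2)"
      unfolding gl R_def using b0 ypr by (simp add: W_def matrix_vector_mul_assoc)
    then show "K * exp (- R / 2) \<in> {gauss_lik Gam (Z *v beta) x | beta. True}" by (metis (mono_tags, lifting) mem_Collect_eq)
  next
    fix v assume "v \<in> {gauss_lik Gam (Z *v beta) x | beta. True}"
    then obtain beta where v: "v = gauss_lik Gam (Z *v beta) x" by auto
    have wV: "W *v beta \<in> V" unfolding V_def by simp
    have e: "y - M *v (Z *v beta) = (p - W *v beta) + r" unfolding ypr W_def by (simp add: matrix_vector_mul_assoc)
    have o: "(p - W *v beta) \<bullet> r = 0" using rV[OF subspace_diff[OF subV pV wV]] by (simp add: inner_commute)
    have "(norm (y - M *v (Z *v beta)))\<^sup>2 \<ge> R" unfolding e R_def by (rule pyth_ge[OF o])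
    then show "v \<le> K * exp (- R / 2)" unfolding v gl using K by simp
  qed
  have SA: "Sup {gauss_lik Gam (Z *v beta + phi *\<^sub>R c tau) x | tau beta phi. tau \<in> {1..CARD('n) - 1} \<and> phi \<noteq> 0}
      = K * exp (- (R - S) / 2)" (is "Sup ?A = _")
  proof (rule cSup_eq_non_empty)
    have "gauss_lik Gam (Z *v 0 + 1 *\<^sub>R c 1) x \<in> ?A" using Tn by fastforce
    then show "?A \<noteq> {}" by blast
  next
    fix v assume "v \<in> ?A"
    then obtain tau beta phi where tau: "tau \<in> T" and v: "v = gauss_lik Gam (Z *v beta + phi *\<^sub>R c tau) x"
      unfolding T_def by auto
    have wV: "W *v beta \<in> V" unfolding V_def by simp
    have e: "y - M *v (Z *v beta + phi *\<^sub>R c tau) = y - W *v beta - phi *\<^sub>R (M *v c tau)"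
      unfolding W_def by (simp add: matrix_vector_mul_assoc matrix_vector_right_distrib matrix_vector_mult_scaleR)
    have "(norm (y - M *v (Z *v beta + phi *\<^sub>R c tau)))\<^sup>2 \<ge> R - S"
      unfolding e using low[OF wV, where ph=phi and tau=tau] sS[OF tau] by simp
    then show "v \<le> K * exp (- (R - S) / 2)" unfolding v gl using K by simp
  next
    fix u assume ub: "\<And>v. v \<in> ?A \<Longrightarrow> v \<le> u"
    have "S \<in> s ` T" unfolding S_def using Tfin Tne by (intro Max_in) auto
    then obtain t0 where t0: "t0 \<in> T" and st0: "s t0 = S" by auto
    define d where "d = dp t0"
    have fle: "K * exp (- (norm (r - ph *\<^sub>R d))\<^sup>2 / 2) \<le> u" if "ph \<noteq> 0" for ph
    proof -
      define w where "w = p - ph *\<^sub>R (M *v c t0 - dp t0)"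
      have "w \<in> V" unfolding w_def by (intro subspace_diff[OF subV] subspace_scale[OF subV] pV dpV')
      then obtain beta where wb: "w = W *v beta" unfolding V_def by auto
      have e: "y - M *v (Z *v beta + ph *\<^sub>R c t0) = r - ph *\<^sub>R d"
        unfolding W_def d_def ypr using wb unfolding w_def W_def
        by (simp add: matrix_vector_mul_assoc matrix_vector_right_distrib matrix_vector_mult_scaleR algebra_simps)
      have "gauss_lik Gam (Z *v beta + ph *\<^sub>R c t0) x \<in> ?A" using t0 that unfolding T_def by blast
      then show ?thesis using ub unfolding gl e by blast
    qed
    show "K * exp (- (R - S) / 2) \<le> u"
    proof (cases "d = 0")
      case True
      then have "S = 0" using st0 s2[of t0] d_def by simp
      then show ?thesis using fle[of 1] True R_def by simp
    next
      case dn: False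
      define rho where "rho = r \<bullet> d"
      have St: "S = rho\<^sup>2 / (norm d)\<^sup>2" using st0 s2[of t0] dn unfolding d_def rho_def by simp
      show ?thesis
      proof (cases "rho = 0")
        case False
        have "rho / (norm d)\<^sup>2 \<noteq> 0" using False dn by simp
        from fle[OF this] show ?thesis using quad_eq[OF dn, of r] unfolding St R_def rho_def by simp
      next
        case True
        then have S0: "S = 0" using St by simp
        define g where "g ph = K * exp (- (norm (r - ph *\<^sub>R d))\<^sup>2 / 2)" for ph
        have lim: "(g \<longlongrightarrow> g 0) (at 0)" unfolding g_def by (intro tendsto_intros) auto
        have ev: "eventually (\<lambda>ph. g ph \<le> u) (at 0)"
          unfolding eventually_at_filter g_def by (intro always_eventually allI impI fle)
        have "g 0 \<le> u" by (rule tendsto_upperbound[OF lim ev]) simp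
        then show ?thesis unfolding g_def S0 R_def by simp
      qed
    qed
  qed
  have "cp_LR Z c Gam x = K * exp (- (R - S) / 2) / (K * exp (- R / 2))"
    unfolding cp_LR_def SA SB ..
  also have "\<dots> = exp (S / 2)"
  proof -
    have "exp (- (R - S) / 2) = exp (- R / 2) * exp (S / 2)" by (simp add: exp_add[symmetric] field_simps)
    then show ?thesis using K by simp
  qed
  finally show ?thesis unfolding S_def s_def T_def y_def M_def .
qed


lemma sq_less_abs: "(t::real) \<ge> 0 \<Longrightarrow> t\<^sup>2 < v\<^sup>2 \<longleftrightarrow> t < \<bar>v\<bar>"
  using abs_le_square_iff[of v t] by auto

theorem lemma3p2:
  fixes Z :: "real^'p^'n" and c :: "nat \<Rightarrow> real^'n" and Gam :: "real^'n^'n" and C :: real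
  assumes "CARD('n) \<ge> 2"
    and "invertible Gam"
  shows "\<exists>h \<in> relu_net1 (2 * CARD('n) - 2). \<forall>x. h x = 1 \<longleftrightarrow> cp_LR Z c Gam x > C"
proof -
  define M where "M = matrix_inv Gam"
  define W where "W = M ** Z"
  define V where "V = range (\<lambda>b. W *v b)"
  have subV: "subspace V" unfolding V_def by (rule sub_range)
  have spanV: "span V = V" using subV by simp
  have "\<forall>tau. \<exists>z. (\<forall>b. z \<bullet> (W *v b) = 0) \<and> M *v c tau - z \<in> V"
  proof
    fix tau
    obtain y' z where y': "y' \<in> span V" and zo: "\<And>w. w \<in> span V \<Longrightarrow> orthogonal z w"
      and e: "M *v c tau = y' + z"
      by (rule orthogonal_subspace_decomp_exists[of V "M *v c tau"]) blast
    have "\<forall>b. z \<bullet> (W *v b) = 0"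
      using zo spanV unfolding V_def orthogonal_def by auto
    moreover have "M *v c tau - z \<in> V" using e y' spanV by simp
    ultimately show "\<exists>z. (\<forall>b. z \<bullet> (W *v b) = 0) \<and> M *v c tau - z \<in> V" by blast
  qed
  then obtain dp where dp: "\<And>tau. (\<forall>b. dp tau \<bullet> (W *v b) = 0) \<and> M *v c tau - dp tau \<in> V"
    by metis
  define a where "a tau = (if dp tau = 0 then 0 else (1 / norm (dp tau)) *\<^sub>R dp tau)" for tau
  have LR: "cp_LR Z c Gam x = exp (Max ((\<lambda>tau. ((M *v x) \<bullet> a tau)\<^sup>2) ` {1..CARD('n)-1}) / 2)" for x
    unfolding M_def
  proof (rule LR_formula[OF assms(2) assms(1)])
    show "dp tau \<bullet> ((matrix_inv Gam ** Z) *v b) = 0" for tau b using dp unfolding W_def M_def by blast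
    show "matrix_inv Gam *v c tau - dp tau \<in> range (\<lambda>b. (matrix_inv Gam ** Z) *v b)" for tau
      using dp unfolding W_def M_def V_def by blast
    show "a tau = (if dp tau = 0 then 0 else (1 / norm (dp tau)) *\<^sub>R dp tau)" for tau
      by (rule a_def)
  qed
  define T where "T = {1..CARD('n)-1}"
  define k where "k = CARD('n) - 1"
  have k1: "k \<ge> 1" using assms(1) unfolding k_def by simp
  have k2: "2 * CARD('n) - 2 = 2 * k" unfolding k_def by simp
  have Tfin: "finite T" and Tne: "T \<noteq> {}" using assms(1) unfolding T_def by auto
  define f where "f x tau = ((M *v x) \<bullet> a tau)\<^sup>2" for x tau
  have LR': "cp_LR Z c Gam x = exp (Max (f x ` T) / 2)" for x unfolding LR f_def T_def ..
  have Sge: "Max (f x ` T) \<ge> 0" for x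
  proof -
    obtain tau where "tau \<in> T" using Tne by blast
    then have "f x tau \<le> Max (f x ` T)" using Tfin by simp
    moreover have "f x tau \<ge> 0" unfolding f_def by simp
    ultimately show ?thesis by linarith
  qed
  define bv where "bv i = a (i+1) v* M" for i
  have bvx: "bv i \<bullet> x = (M *v x) \<bullet> a (i+1)" for i x
    unfolding bv_def dot_lmul_matrix by (simp add: inner_commute)
  show ?thesis
  proof (cases "C < 1")
    case True
    have "cp_LR Z c Gam x > C" for x
    proof -
      have "exp (Max (f x ` T) / 2) \<ge> 1" using Sge[of x] by simp
      then show ?thesis unfolding LR' using True by linarith
    qed
    moreover obtain h where "h \<in> relu_net1 (2 * k)" "\<forall>x::real^'n. h x = 1"
      using net_true[of "2*k"] k1 by auto
    ultimately show ?thesis unfolding k2 by auto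
  next
    case False
    define t where "t = sqrt (2 * ln C)"
    have lnC: "ln C \<ge> 0" using False by simp
    have t0: "t \<ge> 0" unfolding t_def using lnC by simp
    have t2: "t\<^sup>2 = 2 * ln C" unfolding t_def using lnC by simp
    have iff: "cp_LR Z c Gam x > C \<longleftrightarrow> (\<exists>i<k. \<bar>bv i \<bullet> x\<bar> > t)" for x
    proof -
      have "cp_LR Z c Gam x > C \<longleftrightarrow> exp (Max (f x ` T) / 2) > exp (ln C)"
        unfolding LR' using False by simp
      also have "\<dots> \<longleftrightarrow> t\<^sup>2 < Max (f x ` T)" unfolding t2 by (simp add: mult.commute)
      also have "\<dots> \<longleftrightarrow> (\<exists>tau\<in>T. t\<^sup>2 < f x tau)" using Tfin Tne by (simp add: Max_gr_iff)
      also have "\<dots> \<longleftrightarrow> (\<exists>tau\<in>T. t < \<bar>(M *v x) \<bullet> a tau\<bar>)" unfolding f_def using sq_less_abs[OF t0] by simp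
      also have "\<dots> \<longleftrightarrow> (\<exists>i<k. \<bar>bv i \<bullet> x\<bar> > t)"
      proof
        assume "\<exists>tau\<in>T. t < \<bar>(M *v x) \<bullet> a tau\<bar>"
        then obtain tau where "tau \<in> T" "t < \<bar>(M *v x) \<bullet> a tau\<bar>" by blast
        then show "\<exists>i<k. \<bar>bv i \<bullet> x\<bar> > t" unfolding bvx T_def k_def
          by (intro exI[of _ "tau - 1"]) auto
      next
        assume "\<exists>i<k. \<bar>bv i \<bullet> x\<bar> > t"
        then obtain i where "i < k" "\<bar>bv i \<bullet> x\<bar> > t" by blast
        then show "\<exists>tau\<in>T. t < \<bar>(M *v x) \<bullet> a tau\<bar>" unfolding bvx T_def k_def
          by (intro bexI[of _ "i + 1"]) auto
      qed
      finally show ?thesis .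
    qed
    obtain h where "h \<in> relu_net1 (2 * k)" "\<forall>x. h x = 1 \<longleftrightarrow> (\<exists>i<k. \<bar>bv i \<bullet> x\<bar> > t)"
      using net_exists[OF t0 k1, of bv] by blast
    then show ?thesis unfolding k2 using iff by auto
  qed
qed

end
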